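(* Let $T$ be a complete theory and suppose the formula $\theta(x;y)$ has the $\infty$-compatible order property. Then the formula $\varphi(x;y,z):=\theta(x;y)\wedge\neg\theta(x;z)$ has $SOP_3$.
   Context: Work in a sufficiently saturated model of $T$. The characteristic sequence of $\theta$ is $P_n(y_1,\dots,y_n):=\exists x\bigwedge_{i\le n}\theta(x;y_i)$. $\theta$ has the $\infty$-compatible order property if there exist $\langle a_i,b_i:i<\omega\rangle$ such that for all $m<\omega$ and all indices, $P_{2m}(a_{i_1},b_{j_1},\dots,a_{i_m},b_{j_m})$ holds iff $\max\{i_1,\dots,i_m\}<\min\{j_1,\dots,j_m\}$. A formula $\varphi(x;w)$ has $SOP_3$ if there are a formula $\psi(x;w)$, an indiscernible sequence $\langle \bar a_i:i<\omega\rangle$ and $\langle c_j:j<\omega\rangle$ such that: (1) $\{\varphi(x;w),\psi(x;w)\}$ is contradictory; (2) $\varphi(c_j;\bar a_i)$ for $i\le j$ and $\psi(c_j;\bar a_i)$ for $i>j$; (3) for $i<j$, $\{\varphi(x;\bar a_j),\psi(x;\bar a_i)\}$ is contradictory. In particular $T$ then has $SOP_3$. *)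

theory Defs
  imports Main
begin

datatype 'f trm = Var nat | App 'f "'f trm list"

datatype ('f, 'r) fm =
    Eq "'f trm" "'f trm"
  | Rel 'r "'f trm list"
  | Neg "('f, 'r) fm"
  | Conj "('f, 'r) fm" "('f, 'r) fm"
  | Ex nat "('f, 'r) fm"

fun eval_trm :: "('f \<Rightarrow> 'm list \<Rightarrow> 'm) \<Rightarrow> (nat \<Rightarrow> 'm) \<Rightarrow> 'f trm \<Rightarrow> 'm" where
  "eval_trm F v (Var n) = v n"
| "eval_trm F v (App f ts) = F f (map (eval_trm F v) ts)"

fun sat :: "('f \<Rightarrow> 'm list \<Rightarrow> 'm) \<Rightarrow> ('r \<Rightarrow> 'm list \<Rightarrow> bool) \<Rightarrow> (nat \<Rightarrow> 'm)
             \<Rightarrow> ('f, 'r) fm \<Rightarrow> bool" where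
  "sat F R v (Eq s t) = (eval_trm F v s = eval_trm F v t)"
| "sat F R v (Rel r ts) = R r (map (eval_trm F v) ts)"
| "sat F R v (Neg \<phi>) = (\<not> sat F R v \<phi>)"
| "sat F R v (Conj \<phi> \<psi>) = (sat F R v \<phi> \<and> sat F R v \<psi>)"
| "sat F R v (Ex n \<phi>) = (\<exists>a. sat F R (v(n := a)) \<phi>)"

fun fv_trm :: "'f trm \<Rightarrow> nat set" where
  "fv_trm (Var n) = {n}"
| "fv_trm (App f ts) = (\<Union>t\<in>set ts. fv_trm t)"

fun fv :: "('f, 'r) fm \<Rightarrow> nat set" where
  "fv (Eq s t) = fv_trm s \<union> fv_trm t"
| "fv (Rel r ts) = (\<Union>t\<in>set ts. fv_trm t)"
| "fv (Neg \<phi>) = fv \<phi>"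
| "fv (Conj \<phi> \<psi>) = fv \<phi> \<union> fv \<psi>"
| "fv (Ex n \<phi>) = fv \<phi> - {n}"

text \<open>Renaming all variables (free and bound) by a map g; for injective g this is
  capture-free.\<close>

fun rename_trm :: "(nat \<Rightarrow> nat) \<Rightarrow> 'f trm \<Rightarrow> 'f trm" where
  "rename_trm g (Var n) = Var (g n)"
| "rename_trm g (App f ts) = App f (map (rename_trm g) ts)"

fun rename :: "(nat \<Rightarrow> nat) \<Rightarrow> ('f, 'r) fm \<Rightarrow> ('f, 'r) fm" where
  "rename g (Eq s t) = Eq (rename_trm g s) (rename_trm g t)"
| "rename g (Rel r ts) = Rel r (map (rename_trm g) ts)"
| "rename g (Neg \<phi>) = Neg (rename g \<phi>)"
| "rename g (Conj \<phi> \<psi>) = Conj (rename g \<phi>) (rename g \<psi>)"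
| "rename g (Ex n \<phi>) = Ex (g n) (rename g \<phi>)"

definition assign :: "nat list \<Rightarrow> 'm list \<Rightarrow> nat \<Rightarrow> 'm" where
  "assign vs as n = (case map_of (zip vs as) n of Some a \<Rightarrow> a | None \<Rightarrow> undefined)"

text \<open>\<open>holds F R \<phi> xs ws c d\<close>: the formula \<open>\<phi>(x;w)\<close> (x-variables xs, w-variables ws)
  holds of the tuples c, d.\<close>

definition holds :: "('f \<Rightarrow> 'm list \<Rightarrow> 'm) \<Rightarrow> ('r \<Rightarrow> 'm list \<Rightarrow> bool) \<Rightarrow> ('f, 'r) fm
     \<Rightarrow> nat list \<Rightarrow> nat list \<Rightarrow> 'm list \<Rightarrow> 'm list \<Rightarrow> bool" where
  "holds F R \<phi> xs ws c d = sat F R (assign (xs @ ws) (c @ d)) \<phi>"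

text \<open>A formula with parameters is a pair (formula, valuation) where the valuation
  sends all free variables other than x into A.\<close>

definition omega_saturated :: "('f \<Rightarrow> 'm list \<Rightarrow> 'm) \<Rightarrow> ('r \<Rightarrow> 'm list \<Rightarrow> bool) \<Rightarrow> bool" where
  "omega_saturated F R \<longleftrightarrow>
     (\<forall>(A :: 'm set) (p :: (('f, 'r) fm \<times> (nat \<Rightarrow> 'm)) set) (x :: nat).
        finite A \<longrightarrow> (\<forall>(\<phi>, v) \<in> p. \<forall>n \<in> fv \<phi> - {x}. v n \<in> A) \<longrightarrow>
        (\<forall>q \<subseteq> p. finite q \<longrightarrow> (\<exists>a. \<forall>(\<phi>, v) \<in> q. sat F R (v(x := a)) \<phi>)) \<longrightarrow>
        (\<exists>a. \<forall>(\<phi>, v) \<in> p. sat F R (v(x := a)) \<phi>))"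

text \<open>\<open>\<theta>(x;y)\<close> with x-variables xs and y-variables ys. \<open>P\<^sub>2\<^sub>m(a\<^sub>i\<^sub>1, b\<^sub>j\<^sub>1, ..., a\<^sub>i\<^sub>m, b\<^sub>j\<^sub>m)\<close>
  is \<open>\<exists>x. \<And>\<^sub>k \<theta>(x; a\<^sub>i\<^sub>k) \<and> \<theta>(x; b\<^sub>j\<^sub>k)\<close>; it must hold iff max I < min J.\<close>

definition infty_COP :: "('f \<Rightarrow> 'm list \<Rightarrow> 'm) \<Rightarrow> ('r \<Rightarrow> 'm list \<Rightarrow> bool) \<Rightarrow> ('f, 'r) fm
     \<Rightarrow> nat list \<Rightarrow> nat list \<Rightarrow> bool" where
  "infty_COP F R \<theta> xs ys \<longleftrightarrow>
     (\<exists>a b :: nat \<Rightarrow> 'm list.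
        (\<forall>i. length (a i) = length ys \<and> length (b i) = length ys) \<and>
        (\<forall>(m :: nat) (I :: nat \<Rightarrow> nat) (J :: nat \<Rightarrow> nat).
           (\<exists>c. length c = length xs \<and>
                (\<forall>k<m. holds F R \<theta> xs ys c (a (I k)) \<and> holds F R \<theta> xs ys c (b (J k))))
           \<longleftrightarrow> (\<forall>k<m. \<forall>l<m. I k < J l)))"

definition indiscernible :: "('f \<Rightarrow> 'm list \<Rightarrow> 'm) \<Rightarrow> ('r \<Rightarrow> 'm list \<Rightarrow> bool)
     \<Rightarrow> nat \<Rightarrow> (nat \<Rightarrow> 'm list) \<Rightarrow> bool" where
  "indiscernible F R n A \<longleftrightarrow>
     (\<forall>i. length (A i) = n) \<and>
     (\<forall>(\<chi> :: ('f, 'r) fm) (k :: nat) (vs :: nat list) (s :: nat \<Rightarrow> nat) (t :: nat \<Rightarrow> nat).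
        length vs = k * n \<longrightarrow> distinct vs \<longrightarrow> fv \<chi> \<subseteq> set vs \<longrightarrow>
        strict_mono_on {..<k} s \<longrightarrow> strict_mono_on {..<k} t \<longrightarrow>
        (sat F R (assign vs (concat (map (A \<circ> s) [0..<k]))) \<chi> \<longleftrightarrow>
         sat F R (assign vs (concat (map (A \<circ> t) [0..<k]))) \<chi>))"

text \<open>\<open>\<phi>(x;w)\<close> (x-variables xs, w-variables ws) has SOP_3.  "Contradictory" is
  evaluated in the (saturated) model: no tuple satisfies the set.\<close>

definition has_SOP3 :: "('f \<Rightarrow> 'm list \<Rightarrow> 'm) \<Rightarrow> ('r \<Rightarrow> 'm list \<Rightarrow> bool) \<Rightarrow> ('f, 'r) fm
     \<Rightarrow> nat list \<Rightarrow> nat list \<Rightarrow> bool" where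
  "has_SOP3 F R \<phi> xs ws \<longleftrightarrow>
     (\<exists>(\<psi> :: ('f, 'r) fm) (A :: nat \<Rightarrow> 'm list) (C :: nat \<Rightarrow> 'm list).
        fv \<psi> \<subseteq> set xs \<union> set ws \<and>
        indiscernible F R (length ws) A \<and>
        (\<forall>j. length (C j) = length xs) \<and>
        \<comment> \<open>(1)\<close>
        \<not> (\<exists>c d. length c = length xs \<and> length d = length ws \<and>
                 holds F R \<phi> xs ws c d \<and> holds F R \<psi> xs ws c d) \<and>
        \<comment> \<open>(2)\<close>
        (\<forall>i j. (i \<le> j \<longrightarrow> holds F R \<phi> xs ws (C j) (A i)) \<and>
               (j < i \<longrightarrow> holds F R \<psi> xs ws (C j) (A i))) \<and>
        \<comment> \<open>(3)\<close>
        (\<forall>i j. i < j \<longrightarrow>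
           \<not> (\<exists>c. length c = length xs \<and>
                  holds F R \<phi> xs ws c (A j) \<and> holds F R \<psi> xs ws c (A i))))"

text \<open>Variables are renamed: x-variable n becomes 2n, y-variable n becomes 2n, and the
  copy z of y-variable n becomes 2n+1 (both renamings are injective).\<close>

definition phi_of :: "('f, 'r) fm \<Rightarrow> nat list \<Rightarrow> ('f, 'r) fm" where
  "phi_of \<theta> xs =
     Conj (rename (\<lambda>n. 2 * n) \<theta>)
          (Neg (rename (\<lambda>n. if n \<in> set xs then 2 * n else 2 * n + 1) \<theta>))"

end

theory Submission
  imports Defs "HOL-Library.Ramsey" "HOL-Library.Infinite_Set" "HOL-Library.Nat_Bijection"
begin


lemma eval_trm_cong: "(\<forall>n\<in>fv_trm t. v n = w n) \<Longrightarrow> eval_trm F v t = eval_trm F w t"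
proof (induction t)
  case (App f ts)
  have "map (eval_trm F v) ts = map (eval_trm F w) ts" using App by (auto simp: map_eq_conv comp_def)
  then show ?case by (metis eval_trm.simps(2) rename_trm.simps(2) map_map)
qed simp

lemma sat_cong: "(\<forall>n\<in>fv \<phi>. v n = w n) \<Longrightarrow> sat F R v \<phi> = sat F R w \<phi>"
proof (induction \<phi> arbitrary: v w)
  case (Eq s t) then show ?case using eval_trm_cong[of s v w F] eval_trm_cong[of t v w F] by simp
next
  case (Rel r ts)
  have "map (eval_trm F v) ts = map (eval_trm F w) ts"
    using Rel by (auto simp: map_eq_conv intro!: eval_trm_cong)
  then show ?case by (metis sat.simps(2))
next
  case (Ex n \<phi>)
  have "\<And>a. sat F R (v(n:=a)) \<phi> = sat F R (w(n:=a)) \<phi>"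
    using Ex.prems by (intro Ex.IH) auto
  then show ?case by simp
next
  case (Conj a b)
  have "sat F R v a = sat F R w a" "sat F R v b = sat F R w b" using Conj.prems by (auto intro!: Conj.IH)
  then show ?case by simp
qed auto

lemma eval_rename_trm: "eval_trm F v (rename_trm g t) = eval_trm F (v \<circ> g) t"
proof (induction t)
  case (App f ts)
  have "map (eval_trm F v \<circ> rename_trm g) ts = map (eval_trm F (v \<circ> g)) ts" using App by (auto simp: map_eq_conv comp_def)
  then show ?case by (metis eval_trm.simps(2) rename_trm.simps(2) map_map)
qed simp

lemma sat_rename: "inj g \<Longrightarrow> sat F R v (rename g \<phi>) = sat F R (v \<circ> g) \<phi>"
proof (induction \<phi> arbitrary: v)
  case (Eq s t) then show ?case by (simp add: eval_rename_trm comp_def)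
next
  case (Rel r ts) then show ?case by (simp add: eval_rename_trm comp_def)
next
  case (Ex n \<phi>)
  have "\<And>a. (v(g n := a)) \<circ> g = (v \<circ> g)(n := a)"
    using Ex.prems by (auto simp: fun_eq_iff inj_eq)
  then have "\<And>a. sat F R (v(g n := a)) (rename g \<phi>) = sat F R ((v\<circ>g)(n:=a)) \<phi>"
    using Ex.IH[OF Ex.prems] by metis
  then show ?case by (simp del: fun_upd_apply add: comp_def)
qed auto

lemma fv_rename_trm: "fv_trm (rename_trm g t) = g ` fv_trm t"
  by (induction t) auto

lemma fv_rename: "inj g \<Longrightarrow> fv (rename g \<phi>) = g ` fv \<phi>"
  by (induction \<phi>) (auto simp: fv_rename_trm image_Union inj_eq)

lemma finite_fv_trm: "finite (fv_trm t)"
  by (induction t) auto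

lemma finite_fv: "finite (fv \<phi>)"
  by (induction \<phi>) (auto simp: finite_fv_trm)

lemma assign_zip: "distinct vs \<Longrightarrow> (m, d) \<in> set (zip vs ds) \<Longrightarrow> assign vs ds m = d"
  unfolding assign_def
  by (subst map_of_is_SomeI[of _ m d]) (auto simp: map_fst_zip_take)

lemma assign_nth: "distinct vs \<Longrightarrow> q < length vs \<Longrightarrow> q < length ds \<Longrightarrow> assign vs ds (vs ! q) = ds ! q"
  by (rule assign_zip) (auto simp: in_set_zip)

lemma assign_map: "distinct vs \<Longrightarrow> m \<in> set vs \<Longrightarrow> assign vs (map f vs) m = f m"
  by (metis assign_nth in_set_conv_nth length_map nth_map)

lemma map_assign: "distinct vs \<Longrightarrow> length ds = length vs \<Longrightarrow> map (assign vs ds) vs = ds"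
  by (intro nth_equalityI) (auto simp: assign_nth)

lemma sat_holds:
  assumes "distinct (xs @ ys)" "fv \<theta> \<subseteq> set xs \<union> set ys"
  shows "sat F R f \<theta> = holds F R \<theta> xs ys (map f xs) (map f ys)"
  unfolding holds_def
  using assms by (intro sat_cong) (auto simp: assign_map[where vs="xs@ys", simplified])

fun exs :: "nat list \<Rightarrow> ('f,'r) fm \<Rightarrow> ('f,'r) fm" where
  "exs [] \<phi> = \<phi>"
| "exs (n # ns) \<phi> = Ex n (exs ns \<phi>)"

lemma sat_exs: "sat F R v (exs ns \<phi>) \<longleftrightarrow> (\<exists>u. (\<forall>k. k \<notin> set ns \<longrightarrow> u k = v k) \<and> sat F R u \<phi>)"
proof (induction ns arbitrary: v)
  case Nil
  show ?case
  proof
    assume "sat F R v (exs [] \<phi>)" then show "\<exists>u. (\<forall>k. k \<notin> set [] \<longrightarrow> u k = v k) \<and> sat F R u \<phi>" by auto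
  next
    assume "\<exists>u. (\<forall>k. k \<notin> set [] \<longrightarrow> u k = v k) \<and> sat F R u \<phi>"
    then obtain u where "\<forall>k. u k = v k" "sat F R u \<phi>" by auto
    then have "u = v" by auto
    then show "sat F R v (exs [] \<phi>)" using \<open>sat F R u \<phi>\<close> by simp
  qed
next
  case (Cons n ns)
  show ?case
  proof
    assume "sat F R v (exs (n # ns) \<phi>)"
    then obtain a u where "\<forall>k. k \<notin> set ns \<longrightarrow> u k = (v(n:=a)) k" "sat F R u \<phi>" using Cons by auto
    then show "\<exists>u. (\<forall>k. k \<notin> set (n#ns) \<longrightarrow> u k = v k) \<and> sat F R u \<phi>" by (intro exI[of _ u]) auto
  next
    assume "\<exists>u. (\<forall>k. k \<notin> set (n#ns) \<longrightarrow> u k = v k) \<and> sat F R u \<phi>"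
    then obtain u where u: "\<forall>k. k \<notin> set (n#ns) \<longrightarrow> u k = v k" "sat F R u \<phi>" by blast
    have "\<forall>k. k \<notin> set ns \<longrightarrow> u k = (v(n:=u n)) k" using u by auto
    then have "sat F R (v(n:=u n)) (exs ns \<phi>)" using Cons.IH u(2) by blast
    then show "sat F R v (exs (n # ns) \<phi>)" by auto
  qed
qed

lemma fv_exs: "fv (exs ns \<phi>) = fv \<phi> - set ns"
  by (induction ns) auto

fun conjs :: "('f,'r) fm list \<Rightarrow> ('f,'r) fm" where
  "conjs [] = Eq (Var 0) (Var 0)"
| "conjs (\<phi> # ds) = Conj \<phi> (conjs ds)"

lemma sat_conjs: "sat F R v (conjs ds) \<longleftrightarrow> (\<forall>\<phi>\<in>set ds. sat F R v \<phi>)"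
  by (induction ds) auto

lemma fv_conjs: "fv (conjs ds) \<subseteq> {0} \<union> (\<Union>\<phi>\<in>set ds. fv \<phi>)"
  by (induction ds) auto



definition Inv :: "('f \<Rightarrow> 'm list \<Rightarrow> 'm) \<Rightarrow> ('r \<Rightarrow> 'm list \<Rightarrow> bool) \<Rightarrow> ('f,'r) fm set \<Rightarrow> nat \<Rightarrow> (nat \<Rightarrow> 'm) \<Rightarrow> bool" where
  "Inv F R S n V \<longleftrightarrow> (\<forall>\<Delta>. \<Delta> \<subseteq> S \<longrightarrow> finite \<Delta> \<longrightarrow> (\<exists>w. (\<forall>k<n. w k = V k) \<and> (\<forall>\<phi>\<in>\<Delta>. sat F R w \<phi>)))"

lemma Inv_cong: "Inv F R S n V \<Longrightarrow> (\<forall>k<n. V k = V' k) \<Longrightarrow> Inv F R S n V'"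
  unfolding Inv_def by simp

lemma Inv_step:
  assumes sat: "omega_saturated F R" and inv: "Inv F R S n V"
  shows "\<exists>a. Inv F R S (Suc n) (V(n:=a))"
proof -
  define p where "p = {(exs ns (conjs ds), V) | ds ns. set ds \<subseteq> S \<and> set ns \<inter> {..n} = {} \<and> fv (conjs ds) \<subseteq> set ns \<union> {..n}}"
  define A where "A = V ` {..<n}"
  have fA: "finite A" unfolding A_def by simp
  have par: "\<forall>(\<phi>, v) \<in> p. \<forall>k \<in> fv \<phi> - {n}. v k \<in> A"
  proof -
    { fix \<phi> v k assume "(\<phi>, v) \<in> p" "k \<in> fv \<phi>" "k \<noteq> n"
    then obtain ds ns where "\<phi> = exs ns (conjs ds)" "v = V" "fv (conjs ds) \<subseteq> set ns \<union> {..n}"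
      unfolding p_def by blast
    then have "k < n" "v = V" using \<open>k \<in> fv \<phi>\<close> \<open>k \<noteq> n\<close> by (auto simp: fv_exs)
    then have "v k \<in> A" unfolding A_def by simp }
    then show ?thesis by blast
  qed
  have fs: "\<forall>q \<subseteq> p. finite q \<longrightarrow> (\<exists>a. \<forall>(\<phi>, v) \<in> q. sat F R (v(n := a)) \<phi>)"
  proof (intro allI impI)
    fix q assume qp: "q \<subseteq> p" and fq: "finite q"
    have "\<forall>z\<in>q. \<exists>dn. z = (exs (snd dn) (conjs (fst dn)), V) \<and> set (fst dn) \<subseteq> S \<and> set (snd dn) \<inter> {..n} = {} \<and> fv (conjs (fst dn)) \<subseteq> set (snd dn) \<union> {..n}"
    proof
      fix z assume "z \<in> q" then have "z \<in> p" using qp by auto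
      then obtain ds ns where "z = (exs ns (conjs ds), V)" "set ds \<subseteq> S" "set ns \<inter> {..n} = {}" "fv (conjs ds) \<subseteq> set ns \<union> {..n}"
        unfolding p_def by blast
      then show "\<exists>dn. z = (exs (snd dn) (conjs (fst dn)), V) \<and> set (fst dn) \<subseteq> S \<and> set (snd dn) \<inter> {..n} = {} \<and> fv (conjs (fst dn)) \<subseteq> set (snd dn) \<union> {..n}"
        by (intro exI[of _ "(ds,ns)"]) simp
    qed
    from bchoice[OF this] obtain f where f: "\<forall>z\<in>q. z = (exs (snd (f z)) (conjs (fst (f z))), V) \<and> set (fst (f z)) \<subseteq> S \<and> set (snd (f z)) \<inter> {..n} = {} \<and> fv (conjs (fst (f z))) \<subseteq> set (snd (f z)) \<union> {..n}"
      by blast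
    define \<Delta> where "\<Delta> = (\<Union>z\<in>q. set (fst (f z)))"
    have "\<Delta> \<subseteq> S" "finite \<Delta>" using f fq unfolding \<Delta>_def by auto
    then obtain w where w: "\<forall>k<n. w k = V k" "\<forall>\<phi>\<in>\<Delta>. sat F R w \<phi>" using inv unfolding Inv_def by blast
    show "\<exists>a. \<forall>(\<phi>, v) \<in> q. sat F R (v(n := a)) \<phi>"
    proof (intro exI[of _ "w n"] ballI, clarify)
      fix \<phi> v assume z: "(\<phi>, v) \<in> q"
      define ds where "ds = fst (f (\<phi>, v))"
      define ns where "ns = snd (f (\<phi>, v))"
      have zz: "\<phi> = exs ns (conjs ds)" "v = V" "fv (conjs ds) \<subseteq> set ns \<union> {..n}"
        using f z unfolding ds_def ns_def by auto
      have dsD: "set ds \<subseteq> \<Delta>" using z unfolding \<Delta>_def ds_def by auto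
      define u where "u = (\<lambda>k. if k \<in> set ns then w k else (V(n := w n)) k)"
      have "sat F R u (conjs ds) = sat F R w (conjs ds)"
      proof (rule sat_cong, intro ballI)
        fix k assume "k \<in> fv (conjs ds)"
        then have "k \<in> set ns \<or> k \<le> n" using zz(3) by blast
        then have "k \<in> set ns \<or> k < n \<or> k = n" by linarith
        then show "u k = w k" unfolding u_def using w(1) by auto
      qed
      also have "\<dots>" using w(2) dsD by (auto simp: sat_conjs)
      finally have "sat F R u (conjs ds)" .
      moreover have "\<forall>k. k \<notin> set ns \<longrightarrow> u k = (V(n := w n)) k" unfolding u_def by auto
      ultimately show "sat F R (v(n := w n)) \<phi>" unfolding zz sat_exs by blast
    qed
  qed
  obtain a where a: "\<forall>(\<phi>, v) \<in> p. sat F R (v(n := a)) \<phi>"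
    using sat[unfolded omega_saturated_def, rule_format, OF fA par[rule_format] fs[rule_format]] by blast
  have "Inv F R S (Suc n) (V(n:=a))"
    unfolding Inv_def
  proof (intro allI impI)
    fix \<Delta> assume D: "\<Delta> \<subseteq> S" "finite \<Delta>"
    obtain ds where ds: "set ds = \<Delta>" using D finite_list by blast
    have "finite ((\<Union>\<phi>\<in>\<Delta>. fv \<phi>) \<union> {0} - {..n})" using D(2) by (auto simp: finite_fv)
    then obtain ns where ns: "set ns = (\<Union>\<phi>\<in>\<Delta>. fv \<phi>) \<union> {0} - {..n}" using finite_list by blast
    have "fv (conjs ds) \<subseteq> set ns \<union> {..n}" using fv_conjs[of ds] ds ns by auto
    moreover have "set ns \<inter> {..n} = {}" using ns by auto
    ultimately have "(exs ns (conjs ds), V) \<in> p" unfolding p_def using ds D by blast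
    then have "sat F R (V(n:=a)) (exs ns (conjs ds))" using a by auto
    then obtain u where u: "\<forall>k. k \<notin> set ns \<longrightarrow> u k = (V(n:=a)) k" "sat F R u (conjs ds)"
      unfolding sat_exs by blast
    show "\<exists>w. (\<forall>k<Suc n. w k = (V(n := a)) k) \<and> (\<forall>\<phi>\<in>\<Delta>. sat F R w \<phi>)"
      using u ds ns by (intro exI[of _ u]) (auto simp: sat_conjs)
  qed
  then show ?thesis by blast
qed

lemma realize:
  assumes sat: "omega_saturated F R"
    and fs: "\<forall>\<Delta>. \<Delta> \<subseteq> S \<longrightarrow> finite \<Delta> \<longrightarrow> (\<exists>w. \<forall>\<phi>\<in>\<Delta>. sat F R w \<phi>)"
  shows "\<exists>V. \<forall>\<phi>\<in>S. sat F R V \<phi>"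
proof -
  define Vs where "Vs = rec_nat (\<lambda>_. undefined) (\<lambda>n Vn. Vn(n := SOME a. Inv F R S (Suc n) (Vn(n:=a))))"
  have Vs0: "Vs 0 = (\<lambda>_. undefined)" and VsS: "\<And>n. Vs (Suc n) = (Vs n)(n := SOME a. Inv F R S (Suc n) ((Vs n)(n:=a)))"
    unfolding Vs_def by auto
  have I: "Inv F R S n (Vs n)" for n
  proof (induction n)
    case 0 then show ?case using fs unfolding Inv_def by auto
  next
    case (Suc n)
    show ?case unfolding VsS by (rule someI_ex[OF Inv_step[OF sat Suc]])
  qed
  define V where "V = (\<lambda>k. Vs (Suc k) k)"
  have agree: "\<forall>k<n. Vs n k = V k" for n
  proof (induction n)
    case (Suc n) then show ?case unfolding V_def by (auto simp: VsS less_Suc_eq)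
  qed simp
  have IV: "Inv F R S n V" for n using Inv_cong[OF I agree] .
  show ?thesis
  proof (intro exI ballI)
    fix \<phi> assume "\<phi> \<in> S"
    obtain N where N: "\<forall>k\<in>fv \<phi>. k < N" using finite_fv[of \<phi>] finite_nat_bounded by blast
    have "{\<phi>} \<subseteq> S" "finite {\<phi>}" using \<open>\<phi> \<in> S\<close> by auto
    then obtain w where w: "\<forall>k<N. w k = V k" "sat F R w \<phi>"
      using IV[of N] unfolding Inv_def by blast
    show "sat F R V \<phi>" using w N sat_cong[of \<phi> w V] by auto
  qed
qed



definition idx :: "nat list \<Rightarrow> nat \<Rightarrow> nat" where
  "idx vs m = (THE q. q < length vs \<and> vs ! q = m)"

lemma idx_nth: "distinct vs \<Longrightarrow> q < length vs \<Longrightarrow> idx vs (vs ! q) = q"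
  unfolding idx_def by (rule the_equality) (auto simp: nth_eq_iff_index_eq)

lemma idx_in: "distinct vs \<Longrightarrow> m \<in> set vs \<Longrightarrow> idx vs m < length vs \<and> vs ! idx vs m = m"
  by (metis idx_nth in_set_conv_nth)

lemma idx_inj: "distinct vs \<Longrightarrow> m \<in> set vs \<Longrightarrow> m' \<in> set vs \<Longrightarrow> idx vs m = idx vs m' \<Longrightarrow> m = m'"
  by (metis idx_in)

lemma map_idx: "distinct vs \<Longrightarrow> map (\<lambda>m. f (idx vs m)) vs = map f [0..<length vs]"
  by (intro nth_equalityI) (auto simp: idx_nth)

definition av :: "nat \<Rightarrow> nat \<Rightarrow> nat" where "av i p = 3 * prod_encode (i, p)"
definition cv :: "nat \<Rightarrow> nat \<Rightarrow> nat" where "cv i p = 3 * prod_encode (i, p) + 1"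
definition fr :: "nat \<Rightarrow> nat" where "fr m = 3 * m + 2"

lemma av_eq[simp]: "av i p = av i' p' \<longleftrightarrow> i = i' \<and> p = p'" unfolding av_def by auto
lemma cv_eq[simp]: "cv i p = cv i' p' \<longleftrightarrow> i = i' \<and> p = p'" unfolding cv_def by auto
lemma fr_eq[simp]: "fr m = fr m' \<longleftrightarrow> m = m'" unfolding fr_def by auto
lemma av_cv[simp]: "av i p \<noteq> cv j q" "cv j q \<noteq> av i p" unfolding av_def cv_def by presburger+
lemma av_fr[simp]: "av i p \<noteq> fr m" "fr m \<noteq> av i p" unfolding av_def fr_def by presburger+
lemma cv_fr[simp]: "cv i p \<noteq> fr m" "fr m \<noteq> cv i p" unfolding cv_def fr_def by presburger+

definition Af :: "nat \<Rightarrow> (nat \<Rightarrow> 'm) \<Rightarrow> nat \<Rightarrow> 'm list" where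
  "Af n V i = map (\<lambda>p. V (av i p)) [0..<n]"
definition Cf :: "nat \<Rightarrow> (nat \<Rightarrow> 'm) \<Rightarrow> nat \<Rightarrow> 'm list" where
  "Cf n V j = map (\<lambda>p. V (cv j p)) [0..<n]"

definition gC :: "nat list \<Rightarrow> nat list \<Rightarrow> nat \<Rightarrow> nat \<Rightarrow> nat \<Rightarrow> nat \<Rightarrow> nat" where
  "gC xs ys j i off m = (if m \<in> set xs then cv j (idx xs m) else if m \<in> set ys then av i (off + idx ys m) else fr m)"

definition gX :: "nat list \<Rightarrow> nat \<Rightarrow> nat \<Rightarrow> nat \<Rightarrow> nat" where
  "gX ys i off m = (if m \<in> set ys then av i (off + idx ys m) else fr m)"

definition gS :: "nat \<Rightarrow> nat list \<Rightarrow> (nat \<Rightarrow> nat) \<Rightarrow> nat \<Rightarrow> nat" where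
  "gS n vs s m = (if m \<in> set vs then av (s (idx vs m div n)) (idx vs m mod n) else fr m)"

lemma inj_gC: "distinct xs \<Longrightarrow> distinct ys \<Longrightarrow> inj (gC xs ys j i off)"
  unfolding inj_def gC_def by (auto dest: idx_inj)

lemma inj_gX: "distinct ys \<Longrightarrow> inj (gX ys i off)"
  unfolding inj_def gX_def by (auto dest: idx_inj)

lemma inj_gS:
  assumes "distinct vs" "length vs = k * n" "strict_mono_on {..<k} s"
  shows "inj (gS n vs s)"
proof (rule injI)
  fix m m' assume eq: "gS n vs s m = gS n vs s m'"
  show "m = m'"
  proof (cases "m \<in> set vs \<and> m' \<in> set vs")
    case True
    let ?q = "idx vs m" and ?q' = "idx vs m'"
    have q: "?q < k * n" "?q' < k * n" using True idx_in[OF assms(1)] assms(2) by auto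
    then have n: "n > 0" by (cases n) auto
    have d: "?q div n < k" "?q' div n < k" using q n by (auto simp: less_mult_imp_div_less)
    have "s (?q div n) = s (?q' div n)" "?q mod n = ?q' mod n" using eq True unfolding gS_def by auto
    then have "?q div n = ?q' div n" using strict_mono_on_imp_inj_on[OF assms(3)] d by (auto simp: inj_on_def)
    then have "?q = ?q'" using \<open>?q mod n = ?q' mod n\<close> by (metis div_mod_decomp)
    then show ?thesis using True idx_inj[OF assms(1)] by blast
  next
    case False
    then show ?thesis using eq unfolding gS_def by (auto split: if_splits)
  qed
qed

lemma length_concat_const: "(\<forall>i. length (f i) = n) \<Longrightarrow> length (concat (map f [0..<k])) = k * n"
  by (induction k) (auto simp: length_concat sum_list_triv)

lemma concat_nth_const:
  assumes "\<forall>i. length (f i) = n" "q < k * n"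
  shows "concat (map f [0..<k]) ! q = f (q div n) ! (q mod n)"
  using assms(2)
proof (induction k)
  case (Suc k)
  have n: "n > 0" using Suc.prems by (cases n) auto
  have l: "length (concat (map f [0..<k])) = k * n" using length_concat_const[OF assms(1)] .
  show ?case
  proof (cases "q < k * n")
    case True then show ?thesis using Suc.IH l by (simp add: nth_append)
  next
    case False
    then have "q div n = k" using Suc.prems n
      by (metis add.commute div_nat_eqI mult.commute mult_Suc not_less)
    moreover have "q - k * n = q mod n" using \<open>q div n = k\<close> by (metis minus_mult_div_eq_mod mult.commute)
    ultimately show ?thesis using False l by (simp add: nth_append)
  qed
qed simp

lemma sem_gS:
  assumes "distinct vs" "length vs = k * n" "fv \<chi> \<subseteq> set vs" "strict_mono_on {..<k} s"
  shows "sat F R V (rename (gS n vs s) \<chi>) = sat F R (assign vs (concat (map (Af n V \<circ> s) [0..<k]))) \<chi>"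
proof -
  have "sat F R V (rename (gS n vs s) \<chi>) = sat F R (V \<circ> gS n vs s) \<chi>"
    by (rule sat_rename[OF inj_gS[OF assms(1,2,4)]])
  also have "\<dots> = sat F R (assign vs (concat (map (Af n V \<circ> s) [0..<k]))) \<chi>"
  proof (rule sat_cong, intro ballI)
    fix m assume "m \<in> fv \<chi>"
    then have m: "m \<in> set vs" using assms(3) by auto
    define q where "q = idx vs m"
    have q: "q < k * n" "vs ! q = m" using idx_in[OF assms(1) m] assms(2) unfolding q_def by auto
    then have n: "n > 0" by (cases n) auto
    have lA: "\<forall>i. length ((Af n V \<circ> s) i) = n" unfolding Af_def by simp
    have "assign vs (concat (map (Af n V \<circ> s) [0..<k])) m = concat (map (Af n V \<circ> s) [0..<k]) ! q"
      using q assms(1,2) length_concat_const[OF lA] by (metis assign_nth)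
    also have "\<dots> = (Af n V \<circ> s) (q div n) ! (q mod n)" by (rule concat_nth_const[OF lA q(1)])
    also have "\<dots> = V (av (s (q div n)) (q mod n))" unfolding Af_def using n by simp
    also have "\<dots> = (V \<circ> gS n vs s) m" using m unfolding gS_def q_def by simp
    finally show "(V \<circ> gS n vs s) m = assign vs (concat (map (Af n V \<circ> s) [0..<k])) m" by simp
  qed
  finally show ?thesis .
qed

definition ee :: "nat list \<Rightarrow> nat \<Rightarrow> nat" where "ee xs m = (if m \<in> set xs then 2 * m else 2 * m + 1)"

lemma inj_ee: "inj (ee xs)"
  unfolding inj_def ee_def by (auto split: if_splits; presburger)

lemma inj_dbl: "inj (\<lambda>n::nat. 2 * n)" unfolding inj_def by simp

lemma phi_of_alt: "phi_of \<theta> xs = Conj (rename (\<lambda>n. 2 * n) \<theta>) (Neg (rename (ee xs) \<theta>))"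
  unfolding phi_of_def ee_def by simp

definition Iff :: "('f,'r) fm \<Rightarrow> ('f,'r) fm \<Rightarrow> ('f,'r) fm" where
  "Iff a b = Conj (Neg (Conj a (Neg b))) (Neg (Conj b (Neg a)))"

lemma sat_Iff[simp]: "sat F R v (Iff a b) \<longleftrightarrow> (sat F R v a \<longleftrightarrow> sat F R v b)"
  unfolding Iff_def by auto

lemma take_Af: "take L (Af (2 * L) V i) = map (\<lambda>p. V (av i p)) [0..<L]"
  unfolding Af_def by (intro nth_equalityI) auto

lemma drop_Af: "drop L (Af (2 * L) V i) = map (\<lambda>p. V (av i (L + p))) [0..<L]"
  unfolding Af_def by (intro nth_equalityI) auto

lemma ramsey_multi:
  fixes c :: "'a \<Rightarrow> nat set \<Rightarrow> bool" and r :: "'a \<Rightarrow> nat"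
  assumes "finite \<Phi>" "infinite (Z :: nat set)"
  shows "\<exists>H\<subseteq>Z. infinite H \<and> (\<forall>\<phi>\<in>\<Phi>. \<exists>b. \<forall>X. X \<subseteq> H \<and> finite X \<and> card X = r \<phi> \<longrightarrow> c \<phi> X = b)"
  using assms(1)
proof (induction \<Phi> rule: finite_induct)
  case empty then show ?case using assms(2) by blast
next
  case (insert \<phi> \<Phi>)
  then obtain H where H: "H \<subseteq> Z" "infinite H" "\<forall>\<phi>\<in>\<Phi>. \<exists>b. \<forall>X. X \<subseteq> H \<and> finite X \<and> card X = r \<phi> \<longrightarrow> c \<phi> X = b"
    by blast
  define f where "f X = (if c \<phi> X then 0 else (1::nat))" for X
  have "\<forall>X. X \<subseteq> H \<and> finite X \<and> card X = r \<phi> \<longrightarrow> f X < 2" unfolding f_def by auto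
  then obtain Y t where Y: "Y \<subseteq> H" "infinite Y" "t < 2" "\<forall>X. X \<subseteq> Y \<and> finite X \<and> card X = r \<phi> \<longrightarrow> f X = t"
    using Ramsey[OF H(2), of "r \<phi>" f 2] by blast
  have "\<forall>X. X \<subseteq> Y \<and> finite X \<and> card X = r \<phi> \<longrightarrow> c \<phi> X = (t = 0)"
    using Y(4) unfolding f_def by (metis zero_neq_one)
  moreover have "\<forall>\<phi>\<in>\<Phi>. \<exists>b. \<forall>X. X \<subseteq> Y \<and> finite X \<and> card X = r \<phi> \<longrightarrow> c \<phi> X = b"
    using H(3) Y(1) by (meson subset_trans)
  ultimately show ?case using Y(1,2) H(1) by (intro exI[of _ Y]) auto
qed

lemma sorted_image:
  fixes f :: "nat \<Rightarrow> nat"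
  assumes "strict_mono_on {..<k} f"
  shows "sorted_list_of_set (f ` {..<k}) = map f [0..<k]"
proof -
  have "sorted_wrt (<) (map f [0..<k])"
    unfolding sorted_wrt_iff_nth_less using assms by (auto simp: strict_mono_on_def)
  then have "sorted (map f [0..<k])" "distinct (map f [0..<k])" unfolding strict_sorted_iff by auto
  moreover have "set (map f [0..<k]) = f ` {..<k}" by auto
  ultimately show ?thesis
    by (intro sorted_distinct_set_unique) auto
qed

lemma strict_mono_comp_on:
  fixes e :: "nat \<Rightarrow> nat"
  shows "strict_mono e \<Longrightarrow> strict_mono_on {..<k} s \<Longrightarrow> strict_mono_on {..<k} (e \<circ> s)"
  unfolding strict_mono_on_def strict_mono_def by auto

context
  fixes F :: "'f \<Rightarrow> 'm list \<Rightarrow> 'm" and R :: "'r \<Rightarrow> 'm list \<Rightarrow> bool"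
    and \<theta> :: "('f, 'r) fm" and xs ys :: "nat list"
  assumes dxs: "distinct xs" and dys: "distinct ys" and disj: "set xs \<inter> set ys = {}"
    and fvt: "fv \<theta> \<subseteq> set xs \<union> set ys"
begin

lemma dxy: "distinct (xs @ ys)" using dxs dys disj by auto

lemma sem_gC: "sat F R V (rename (gC xs ys j i off) \<theta>) =
   holds F R \<theta> xs ys (Cf (length xs) V j) (map (\<lambda>p. V (av i (off + p))) [0..<length ys])"
proof -
  have "sat F R V (rename (gC xs ys j i off) \<theta>) = sat F R (V \<circ> gC xs ys j i off) \<theta>"
    by (rule sat_rename[OF inj_gC[OF dxs dys]])
  also have "\<dots> = holds F R \<theta> xs ys (map (V \<circ> gC xs ys j i off) xs) (map (V \<circ> gC xs ys j i off) ys)"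
    by (rule sat_holds[OF dxy fvt])
  also have "map (V \<circ> gC xs ys j i off) xs = map (\<lambda>m. V (cv j (idx xs m))) xs"
    unfolding gC_def by auto
  also have "\<dots> = Cf (length xs) V j" unfolding Cf_def by (rule map_idx[OF dxs])
  also have "map (V \<circ> gC xs ys j i off) ys = map (\<lambda>m. V (av i (off + idx ys m))) ys"
    using disj unfolding gC_def by auto
  also have "\<dots> = map (\<lambda>p. V (av i (off + p))) [0..<length ys]" by (rule map_idx[OF dys])
  finally show ?thesis .
qed

lemma sem_gX: "sat F R u (rename (gX ys i off) \<theta>) =
   holds F R \<theta> xs ys (map (u \<circ> fr) xs) (map (\<lambda>p. u (av i (off + p))) [0..<length ys])"
proof -
  have "sat F R u (rename (gX ys i off) \<theta>) = sat F R (u \<circ> gX ys i off) \<theta>"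
    by (rule sat_rename[OF inj_gX[OF dys]])
  also have "\<dots> = holds F R \<theta> xs ys (map (u \<circ> gX ys i off) xs) (map (u \<circ> gX ys i off) ys)"
    by (rule sat_holds[OF dxy fvt])
  also have "map (u \<circ> gX ys i off) xs = map (u \<circ> fr) xs"
    using disj unfolding gX_def by auto
  also have "map (u \<circ> gX ys i off) ys = map (\<lambda>m. u (av i (off + idx ys m))) ys"
    unfolding gX_def by auto
  also have "\<dots> = map (\<lambda>p. u (av i (off + p))) [0..<length ys]" by (rule map_idx[OF dys])
  finally show ?thesis .
qed

lemma dist3: "distinct (map (\<lambda>n. 2 * n) xs @ map (\<lambda>n. 2 * n) ys @ map (\<lambda>n. 2 * n + 1) ys)"
proof -
  have "distinct (map (\<lambda>n. 2 * n) (xs @ ys))" using dxy by (simp only: distinct_map) (simp add: inj_on_def)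
  moreover have "distinct (map (\<lambda>n. 2 * n + 1) ys)" using dys by (simp add: distinct_map inj_on_def)
  moreover have "set (map (\<lambda>n. 2 * n) (xs @ ys)) \<inter> set (map (\<lambda>n. 2 * n + 1) ys) = {}" by (auto; presburger)
  ultimately show ?thesis by auto
qed

lemma PHI:
  assumes c: "length c = length xs" and d: "length d = 2 * length ys"
  shows "holds F R (phi_of \<theta> xs) (map (\<lambda>n. 2 * n) xs) (map (\<lambda>n. 2 * n) ys @ map (\<lambda>n. 2 * n + 1) ys) c d
     \<longleftrightarrow> holds F R \<theta> xs ys c (take (length ys) d) \<and> \<not> holds F R \<theta> xs ys c (drop (length ys) d)"
    (is "?L \<longleftrightarrow> ?R")
  and "holds F R (rename (ee xs) \<theta>) (map (\<lambda>n. 2 * n) xs) (map (\<lambda>n. 2 * n) ys @ map (\<lambda>n. 2 * n + 1) ys) c d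
     \<longleftrightarrow> holds F R \<theta> xs ys c (drop (length ys) d)"
proof -
  let ?vs = "map (\<lambda>n. 2 * n) xs @ map (\<lambda>n. 2 * n) ys @ map (\<lambda>n. 2 * n + 1) ys"
  define u where "u = assign ?vs (c @ d)"
  have mu: "map u ?vs = c @ d" unfolding u_def using dist3 c d by (intro map_assign) auto
  have m1: "map u (map (\<lambda>n. 2 * n) xs) = c" using mu c
    by (metis (no_types, lifting) append_eq_append_conv length_map map_append)
  have m23: "map u (map (\<lambda>n. 2 * n) ys @ map (\<lambda>n. 2 * n + 1) ys) = d" using mu c
    by (metis (no_types, lifting) append_eq_append_conv length_map map_append)
  have m2: "map u (map (\<lambda>n. 2 * n) ys) = take (length ys) d"
    using m23 by (metis append_eq_conv_conj length_map map_append)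
  have m3: "map u (map (\<lambda>n. 2 * n + 1) ys) = drop (length ys) d"
    using m23 by (metis append_eq_conv_conj length_map map_append)
  have s1: "sat F R u (rename (\<lambda>n. 2 * n) \<theta>) = holds F R \<theta> xs ys c (take (length ys) d)"
    unfolding sat_rename[OF inj_dbl] sat_holds[OF dxy fvt] using m1 m2 by (simp add: comp_def)
  have "map (u \<circ> ee xs) xs = map u (map (\<lambda>n. 2 * n) xs)" unfolding ee_def by simp
  then have e1: "map (u \<circ> ee xs) xs = c" using m1 by (simp only:)
  have "map (u \<circ> ee xs) ys = map u (map (\<lambda>n. 2 * n + 1) ys)" using disj unfolding ee_def by auto
  then have e2: "map (u \<circ> ee xs) ys = drop (length ys) d" using m3 by (simp only:)
  have s2: "sat F R u (rename (ee xs) \<theta>) = holds F R \<theta> xs ys c (drop (length ys) d)"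
    unfolding sat_rename[OF inj_ee] sat_holds[OF dxy fvt] using e1 e2 by simp
  show "?L \<longleftrightarrow> ?R" unfolding holds_def phi_of_alt using s1 s2 unfolding u_def holds_def by simp
  show "holds F R (rename (ee xs) \<theta>) (map (\<lambda>n. 2 * n) xs) (map (\<lambda>n. 2 * n) ys @ map (\<lambda>n. 2 * n + 1) ys) c d
     \<longleftrightarrow> holds F R \<theta> xs ys c (drop (length ys) d)" using s2 unfolding u_def holds_def by simp
qed

definition S3f :: "nat \<Rightarrow> nat \<Rightarrow> ('f, 'r) fm" where
  "S3f i j = exs (map fr xs) (Conj (rename (gX ys j 0) \<theta>) (rename (gX ys i (length ys)) \<theta>))"

lemma sem_S3: "sat F R V (S3f i j) \<longleftrightarrow> (\<exists>c. length c = length xs \<and>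
     holds F R \<theta> xs ys c (map (\<lambda>p. V (av j p)) [0..<length ys]) \<and>
     holds F R \<theta> xs ys c (map (\<lambda>p. V (av i (length ys + p))) [0..<length ys]))"
proof
  assume "sat F R V (S3f i j)"
  then obtain u where u: "\<forall>k. k \<notin> set (map fr xs) \<longrightarrow> u k = V k"
    "sat F R u (rename (gX ys j 0) \<theta>)" "sat F R u (rename (gX ys i (length ys)) \<theta>)"
    unfolding S3f_def sat_exs by auto
  have uav: "u (av a p) = V (av a p)" for a p
  proof -
    have "av a p \<notin> set (map fr xs)" by auto
    then show ?thesis using u(1) by blast
  qed
  show "\<exists>c. length c = length xs \<and>
     holds F R \<theta> xs ys c (map (\<lambda>p. V (av j p)) [0..<length ys]) \<and>
     holds F R \<theta> xs ys c (map (\<lambda>p. V (av i (length ys + p))) [0..<length ys])"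
    using u(2,3) unfolding sem_gX uav by (intro exI[of _ "map (u \<circ> fr) xs"]) simp
next
  assume "\<exists>c. length c = length xs \<and>
     holds F R \<theta> xs ys c (map (\<lambda>p. V (av j p)) [0..<length ys]) \<and>
     holds F R \<theta> xs ys c (map (\<lambda>p. V (av i (length ys + p))) [0..<length ys])"
  then obtain c where c: "length c = length xs" "holds F R \<theta> xs ys c (map (\<lambda>p. V (av j p)) [0..<length ys])"
     "holds F R \<theta> xs ys c (map (\<lambda>p. V (av i (length ys + p))) [0..<length ys])" by blast
  define u where "u = (\<lambda>m. if \<exists>x\<in>set xs. m = fr x then c ! idx xs ((m - 2) div 3) else V m)"
  have ufr: "map (u \<circ> fr) xs = c"
  proof -
    have "map (u \<circ> fr) xs = map (\<lambda>x. c ! idx xs x) xs" unfolding u_def fr_def by auto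
    also have "\<dots> = map ((!) c) [0..<length xs]" by (rule map_idx[OF dxs])
    also have "\<dots> = c" using c(1) by (metis map_nth)
    finally show ?thesis .
  qed
  have uav: "u (av a p) = V (av a p)" for a p unfolding u_def by auto
  have uo: "\<forall>k. k \<notin> set (map fr xs) \<longrightarrow> u k = V k" unfolding u_def by auto
  have "sat F R u (rename (gX ys j 0) \<theta>)" "sat F R u (rename (gX ys i (length ys)) \<theta>)"
    unfolding sem_gX ufr uav using c by auto
  then show "sat F R V (S3f i j)" unfolding S3f_def sat_exs using uo by auto
qed

definition S1 :: "('f,'r) fm set" where
  "S1 = {Iff (rename (gS (2 * length ys) vs s) \<chi>) (rename (gS (2 * length ys) vs t) \<chi>) | \<chi> k vs s t.
     length vs = k * (2 * length ys) \<and> distinct vs \<and> fv \<chi> \<subseteq> set vs \<and> strict_mono_on {..<k} s \<and> strict_mono_on {..<k} t}"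
definition S2a :: "('f,'r) fm set" where "S2a = {rename (gC xs ys j i 0) \<theta> | i j. i \<le> j}"
definition S2b :: "('f,'r) fm set" where "S2b = {Neg (rename (gC xs ys j i (length ys)) \<theta>) | i j. i \<le> j}"
definition S2c :: "('f,'r) fm set" where "S2c = {rename (gC xs ys j i (length ys)) \<theta> | i j. j < i}"
definition S3 :: "('f,'r) fm set" where "S3 = {Neg (S3f i j) | i j. i < j}"

lemma conclude:
  assumes V: "\<forall>\<phi>\<in>S1 \<union> S2a \<union> S2b \<union> S2c \<union> S3. sat F R V \<phi>"
  shows "has_SOP3 F R (phi_of \<theta> xs) (map (\<lambda>n. 2 * n) xs) (map (\<lambda>n. 2 * n) ys @ map (\<lambda>n. 2 * n + 1) ys)"
proof -
  let ?L = "length ys"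
  let ?xs2 = "map (\<lambda>n. 2 * n) xs" and ?ws2 = "map (\<lambda>n. 2 * n) ys @ map (\<lambda>n. 2 * n + 1) ys"
  define A where "A = Af (2 * ?L) V"
  define C where "C = Cf (length xs) V"
  define \<psi> where "\<psi> = rename (ee xs) \<theta>"
  have lA: "length (A i) = 2 * ?L" for i unfolding A_def Af_def by simp
  have lC: "length (C j) = length xs" for j unfolding C_def Cf_def by simp
  have tA: "take ?L (A i) = map (\<lambda>p. V (av i p)) [0..<?L]" for i unfolding A_def by (rule take_Af)
  have dA: "drop ?L (A i) = map (\<lambda>p. V (av i (?L + p))) [0..<?L]" for i unfolding A_def by (rule drop_Af)
  have fvpsi: "fv \<psi> \<subseteq> set ?xs2 \<union> set ?ws2"
    unfolding \<psi>_def fv_rename[OF inj_ee] using fvt by (auto simp: ee_def)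
  have ind: "indiscernible F R (length ?ws2) A"
    unfolding indiscernible_def
  proof (intro conjI allI impI)
    fix i show "length (A i) = length ?ws2" using lA by simp
  next
    fix \<chi> :: "('f,'r) fm" and k :: nat and vs :: "nat list" and s t :: "nat \<Rightarrow> nat"
    assume a: "length vs = k * length ?ws2" "distinct vs" "fv \<chi> \<subseteq> set vs" "strict_mono_on {..<k} s" "strict_mono_on {..<k} t"
    then have "Iff (rename (gS (2 * ?L) vs s) \<chi>) (rename (gS (2 * ?L) vs t) \<chi>) \<in> S1"
      unfolding S1_def by (intro CollectI exI[of _ \<chi>] exI[of _ k] exI[of _ vs] exI[of _ s] exI[of _ t]) (simp add: mult_2)
    then have "sat F R V (Iff (rename (gS (2 * ?L) vs s) \<chi>) (rename (gS (2 * ?L) vs t) \<chi>))"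
      using V by blast
    then have eqV: "sat F R V (rename (gS (2 * ?L) vs s) \<chi>) = sat F R V (rename (gS (2 * ?L) vs t) \<chi>)"
      by simp
    have l: "length vs = k * (2 * ?L)" using a(1) by simp
    show "sat F R (assign vs (concat (map (A \<circ> s) [0..<k]))) \<chi> =
         sat F R (assign vs (concat (map (A \<circ> t) [0..<k]))) \<chi>"
      using eqV sem_gS[OF a(2) l a(3) a(4), of F R V] sem_gS[OF a(2) l a(3) a(5), of F R V] unfolding A_def by argo
  qed
  have c1: "\<not> (\<exists>c d. length c = length ?xs2 \<and> length d = length ?ws2 \<and>
                 holds F R (phi_of \<theta> xs) ?xs2 ?ws2 c d \<and> holds F R \<psi> ?xs2 ?ws2 c d)"
    unfolding \<psi>_def using PHI by auto
  have c2: "(i \<le> j \<longrightarrow> holds F R (phi_of \<theta> xs) ?xs2 ?ws2 (C j) (A i)) \<and>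
               (j < i \<longrightarrow> holds F R \<psi> ?xs2 ?ws2 (C j) (A i))" for i j
  proof (intro conjI impI)
    assume "i \<le> j"
    then have "rename (gC xs ys j i 0) \<theta> \<in> S2a" "Neg (rename (gC xs ys j i ?L) \<theta>) \<in> S2b"
      unfolding S2a_def S2b_def by auto
    then have "sat F R V (rename (gC xs ys j i 0) \<theta>)" "sat F R V (Neg (rename (gC xs ys j i ?L) \<theta>))"
      using V by blast+
    then have "holds F R \<theta> xs ys (C j) (take ?L (A i))" "\<not> holds F R \<theta> xs ys (C j) (drop ?L (A i))"
      unfolding tA dA C_def by (simp_all add: sem_gC)
    then show "holds F R (phi_of \<theta> xs) ?xs2 ?ws2 (C j) (A i)"
      using PHI(1)[OF lC lA] by blast
  next
    assume "j < i"
    then have "rename (gC xs ys j i ?L) \<theta> \<in> S2c" unfolding S2c_def by auto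
    then have "sat F R V (rename (gC xs ys j i ?L) \<theta>)" using V by blast
    then have "holds F R \<theta> xs ys (C j) (drop ?L (A i))"
      unfolding dA C_def by (simp add: sem_gC)
    then show "holds F R \<psi> ?xs2 ?ws2 (C j) (A i)"
      unfolding \<psi>_def using PHI(2)[OF lC lA] by blast
  qed
  have c3: "\<not> (\<exists>c. length c = length ?xs2 \<and>
                  holds F R (phi_of \<theta> xs) ?xs2 ?ws2 c (A j) \<and> holds F R \<psi> ?xs2 ?ws2 c (A i))"
    if "i < j" for i j
  proof
    assume "\<exists>c. length c = length ?xs2 \<and>
                  holds F R (phi_of \<theta> xs) ?xs2 ?ws2 c (A j) \<and> holds F R \<psi> ?xs2 ?ws2 c (A i)"
    then obtain c where c: "length c = length xs" "holds F R (phi_of \<theta> xs) ?xs2 ?ws2 c (A j)" "holds F R \<psi> ?xs2 ?ws2 c (A i)"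
      by auto
    then have "holds F R \<theta> xs ys c (map (\<lambda>p. V (av j p)) [0..<?L])"
       "holds F R \<theta> xs ys c (map (\<lambda>p. V (av i (?L + p))) [0..<?L])"
      unfolding \<psi>_def PHI(1)[OF c(1) lA] PHI(2)[OF c(1) lA] tA dA by auto
    then have "sat F R V (S3f i j)" unfolding sem_S3 using c(1) by blast
    moreover have "Neg (S3f i j) \<in> S3" using \<open>i < j\<close> unfolding S3_def by auto
    ultimately show False using V by (metis UnI2 sat.simps(3))
  qed
  show ?thesis unfolding has_SOP3_def
    apply (rule exI[of _ \<psi>], rule exI[of _ A], rule exI[of _ C])
    using fvpsi ind lC c1 c2 c3 by auto
qed

lemma witness:
  assumes cop: "infty_COP F R \<theta> xs ys" and fD: "finite \<Delta>" and D: "\<Delta> \<subseteq> S1 \<union> S2a \<union> S2b \<union> S2c \<union> S3"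
  shows "\<exists>w. \<forall>\<phi>\<in>\<Delta>. sat F R w \<phi>"
proof -
  let ?L = "length ys" and ?X = "length xs"
  obtain a b :: "nat \<Rightarrow> 'm list" where lab: "\<forall>i. length (a i) = ?L \<and> length (b i) = ?L"
    and iff: "\<forall>(m :: nat) (I :: nat \<Rightarrow> nat) (J :: nat \<Rightarrow> nat).
           (\<exists>c. length c = ?X \<and>
                (\<forall>k<m. holds F R \<theta> xs ys c (a (I k)) \<and> holds F R \<theta> xs ys c (b (J k))))
           \<longleftrightarrow> (\<forall>k<m. \<forall>l<m. I k < J l)"
    using cop unfolding infty_COP_def by blast
  have cop1: "i < j" if "length c = ?X" "holds F R \<theta> xs ys c (a i)" "holds F R \<theta> xs ys c (b j)" for c i j
    using iff[rule_format, of 1 "\<lambda>_. i" "\<lambda>_. j"] that by auto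
  define Oab where "Oab i = a i @ b i" for i
  define f1 :: "('f,'r) fm \<times> nat \<times> nat list \<times> (nat \<Rightarrow> nat) \<times> (nat \<Rightarrow> nat) \<Rightarrow> ('f,'r) fm" where "f1 = (\<lambda>(\<chi>, k, vs, s, t). Iff (rename (gS (2 * ?L) vs s) \<chi>) (rename (gS (2 * ?L) vs t) \<chi>))"
  define I1 :: "(('f,'r) fm \<times> nat \<times> nat list \<times> (nat \<Rightarrow> nat) \<times> (nat \<Rightarrow> nat)) set" where "I1 = {(\<chi>, k, vs, s, t). length vs = k * (2 * ?L) \<and> distinct vs \<and> fv \<chi> \<subseteq> set vs \<and> strict_mono_on {..<k} s \<and> strict_mono_on {..<k} t}"
  have sub1: "\<Delta> \<inter> S1 \<subseteq> f1 ` I1"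
  proof
    fix \<phi> assume "\<phi> \<in> \<Delta> \<inter> S1"
    then have "\<phi> \<in> S1" by simp
    then have "\<exists>\<chi> k vs s t. \<phi> = Iff (rename (gS (2 * ?L) vs s) \<chi>) (rename (gS (2 * ?L) vs t) \<chi>) \<and>
      (length vs = k * (2 * ?L) \<and> distinct vs \<and> fv \<chi> \<subseteq> set vs \<and> strict_mono_on {..<k} s \<and> strict_mono_on {..<k} t)"
      unfolding S1_def by (simp only: mem_Collect_eq)
    then obtain \<chi> k vs s t where h: "\<phi> = Iff (rename (gS (2 * ?L) vs s) \<chi>) (rename (gS (2 * ?L) vs t) \<chi>)"
      "length vs = k * (2 * ?L) \<and> distinct vs \<and> fv \<chi> \<subseteq> set vs \<and> strict_mono_on {..<k} s \<and> strict_mono_on {..<k} t"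
      by blast
    have "(\<chi>, k, vs, s, t) \<in> I1" unfolding I1_def using h(2) by simp
    moreover have "\<phi> = f1 (\<chi>, k, vs, s, t)" unfolding f1_def h(1) by simp
    ultimately show "\<phi> \<in> f1 ` I1" by blast
  qed
  obtain C1 where C1: "C1 \<subseteq> I1" "finite C1" "\<Delta> \<inter> S1 = f1 ` C1"
    using finite_subset_image[OF _ sub1] fD by (meson finite_Int)
  define \<Phi> where "\<Phi> = (\<lambda>(\<chi>, k, vs, s, t). (\<chi>, k, vs)) ` C1"
  have fPhi: "finite \<Phi>" unfolding \<Phi>_def using C1 by simp
  define f2 :: "nat \<times> nat \<Rightarrow> ('f,'r) fm" where "f2 = (\<lambda>(i, j). rename (gC xs ys j i ?L) \<theta>)"
  have sub2: "\<Delta> \<inter> S2c \<subseteq> f2 ` {(i,j). j < i}"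
  proof
    fix \<phi> assume "\<phi> \<in> \<Delta> \<inter> S2c"
    then obtain i j where "\<phi> = rename (gC xs ys j i ?L) \<theta>" "j < i" unfolding S2c_def by blast
    then show "\<phi> \<in> f2 ` {(i,j). j < i}" unfolding f2_def by (intro image_eqI[of _ _ "(i, j)"]) auto
  qed
  obtain C2 where C2: "C2 \<subseteq> {(i,j). j < i}" "finite C2" "\<Delta> \<inter> S2c = f2 ` C2"
    using finite_subset_image[OF _ sub2] fD by (meson finite_Int)
  obtain N where "fst ` C2 \<subseteq> {..<N}" using finite_nat_bounded[of "fst ` C2"] C2(2) by blast
  then have N: "\<forall>i\<in>fst ` C2. i < N" by auto
  define col :: "('f,'r) fm \<times> nat \<times> nat list \<Rightarrow> nat set \<Rightarrow> bool" where "col = (\<lambda>(\<chi>, k, vs) X. sat F R (assign vs (concat (map (\<lambda>q. Oab (sorted_list_of_set X ! q)) [0..<k]))) \<chi>)"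
  obtain H where H: "infinite H" "\<forall>\<phi>\<in>\<Phi>. \<exists>b. \<forall>X. X \<subseteq> H \<and> finite X \<and> card X = fst (snd \<phi>) \<longrightarrow> col \<phi> X = b"
    using ramsey_multi[OF fPhi infinite_UNIV_nat, where c=col and r="\<lambda>\<phi>. fst (snd \<phi>)"] by blast
  define e where "e = enumerate H"
  have sme: "strict_mono e" unfolding e_def using H(1) by (simp add: strict_monoI enumerate_mono)
  have eH: "e i \<in> H" for i unfolding e_def using H(1) by (rule enumerate_in_set)
  define ccP where "ccP j c \<longleftrightarrow> length c = ?X \<and> (\<forall>i. i \<le> j \<longrightarrow> holds F R \<theta> xs ys c (a (e i))) \<and>
     (\<forall>i. j < i \<and> i < N \<longrightarrow> holds F R \<theta> xs ys c (b (e i)))" for j c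
  have ccex: "\<exists>c. ccP j c" for j
  proof -
    let ?m = "N + Suc j" and ?I = "\<lambda>k. e (min k j)" and ?J = "\<lambda>k. e (max k (Suc j))"
    have "\<forall>k<?m. \<forall>l<?m. ?I k < ?J l" using sme by (auto simp: strict_mono_less)
    then obtain c where c: "length c = ?X" "\<forall>k<?m. holds F R \<theta> xs ys c (a (?I k)) \<and> holds F R \<theta> xs ys c (b (?J k))"
      using iff[rule_format, of ?m ?I ?J] by blast
    have "holds F R \<theta> xs ys c (a (e i))" if "i \<le> j" for i
      using c(2)[rule_format, of i] that by (simp add: min_absorb1)
    moreover have "holds F R \<theta> xs ys c (b (e i))" if "j < i" "i < N" for i
      using c(2)[rule_format, of i] that by (simp add: max_absorb1)
    ultimately show ?thesis unfolding ccP_def using c(1) by blast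
  qed
  define cc where "cc j = (SOME c. ccP j c)" for j
  have cc: "ccP j (cc j)" for j unfolding cc_def using ccex by (rule someI_ex)
  define w where "w m = (if m mod 3 = 0 then Oab (e (fst (prod_decode (m div 3)))) ! snd (prod_decode (m div 3))
      else if m mod 3 = 1 then cc (fst (prod_decode (m div 3))) ! snd (prod_decode (m div 3)) else undefined)" for m
  have wav: "w (av i p) = Oab (e i) ! p" for i p unfolding w_def av_def by simp
  have d3: "Suc (3 * x) div 3 = x" for x :: nat by presburger
  have wcv: "w (cv j p) = cc j ! p" for j p unfolding w_def cv_def by (simp add: d3)
  have lO: "length (Oab i) = 2 * ?L" for i unfolding Oab_def using lab by simp
  have AfW: "Af (2 * ?L) w i = Oab (e i)" for i
    unfolding Af_def wav by (metis lO map_nth)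
  have CfW: "Cf ?X w j = cc j" for j
    unfolding Cf_def wcv using cc[of j] unfolding ccP_def by (metis map_nth)
  have wa: "map (\<lambda>p. w (av i (0 + p))) [0..<?L] = a (e i)" for i
    using lab unfolding wav Oab_def by (intro nth_equalityI) (auto simp: nth_append)
  have wb: "map (\<lambda>p. w (av i (?L + p))) [0..<?L] = b (e i)" for i
    using lab unfolding wav Oab_def by (intro nth_equalityI) (auto simp: nth_append)
  show ?thesis
  proof (intro exI ballI)
    fix \<phi> assume "\<phi> \<in> \<Delta>"
    then consider "\<phi> \<in> \<Delta> \<inter> S1" | "\<phi> \<in> S2a" | "\<phi> \<in> S2b" | "\<phi> \<in> \<Delta> \<inter> S2c" | "\<phi> \<in> S3" using D by blast
    then show "sat F R w \<phi>"
    proof cases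
      case 1
      then have "\<phi> \<in> f1 ` C1" using C1(3) by simp
      then obtain tup where tup: "tup \<in> C1" "\<phi> = f1 tup" by blast
      obtain \<chi> k vs s t where "tup = (\<chi>, k, vs, s, t)" using prod_cases5 by blast
      then have t: "(\<chi>, k, vs, s, t) \<in> C1" "\<phi> = f1 (\<chi>, k, vs, s, t)" using tup by simp_all
      then have v: "length vs = k * (2 * ?L)" "distinct vs" "fv \<chi> \<subseteq> set vs" "strict_mono_on {..<k} s" "strict_mono_on {..<k} t"
        using C1(1) unfolding I1_def by auto
      have inPhi: "(\<chi>, k, vs) \<in> \<Phi>" unfolding \<Phi>_def by (rule image_eqI[OF _ t(1)]) simp
      have "\<exists>bb. \<forall>X. X \<subseteq> H \<and> finite X \<and> card X = k \<longrightarrow> col (\<chi>, k, vs) X = bb"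
        using H(2)[rule_format, OF inPhi] by simp
      then obtain bb where bb: "\<forall>X. X \<subseteq> H \<and> finite X \<and> card X = k \<longrightarrow> col (\<chi>, k, vs) X = bb"
        by blast
      have gen: "sat F R w (rename (gS (2 * ?L) vs u) \<chi>) = bb" if u: "strict_mono_on {..<k} u" for u
      proof -
        have smu: "strict_mono_on {..<k} (e \<circ> u)" by (rule strict_mono_comp_on[OF sme u])
        have card: "card ((e \<circ> u) ` {..<k}) = k"
          using card_image[OF strict_mono_on_imp_inj_on[OF smu]] by simp
        have sub: "(e \<circ> u) ` {..<k} \<subseteq> H" using eH by auto
        have hm: "map (\<lambda>q. Oab (sorted_list_of_set ((e \<circ> u) ` {..<k}) ! q)) [0..<k] = map (Af (2 * ?L) w \<circ> u) [0..<k]"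
          unfolding sorted_image[OF smu] AfW by simp
        have "col (\<chi>, k, vs) ((e \<circ> u) ` {..<k}) = sat F R (assign vs (concat (map (Af (2 * ?L) w \<circ> u) [0..<k]))) \<chi>"
          unfolding col_def prod.case hm by (rule refl)
        also have "\<dots> = sat F R w (rename (gS (2 * ?L) vs u) \<chi>)"
          using sem_gS[OF v(2) v(1) v(3) u, of F R w] by (rule sym)
        finally show ?thesis using bb card sub by auto
      qed
      show ?thesis unfolding t(2) f1_def using gen[OF v(4)] gen[OF v(5)] by simp
    next
      case 2
      then obtain i j where ij: "\<phi> = rename (gC xs ys j i 0) \<theta>" "i \<le> j" unfolding S2a_def by blast
      show ?thesis unfolding ij sem_gC CfW wa using cc[of j] ij(2) unfolding ccP_def by blast
    next
      case 3
      then obtain i j where ij: "\<phi> = Neg (rename (gC xs ys j i ?L) \<theta>)" "i \<le> j" unfolding S2b_def by blast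
      have "\<not> holds F R \<theta> xs ys (cc j) (b (e i))"
      proof
        assume "holds F R \<theta> xs ys (cc j) (b (e i))"
        moreover have "holds F R \<theta> xs ys (cc j) (a (e j))" "length (cc j) = ?X" using cc[of j] unfolding ccP_def by auto
        ultimately have "e j < e i" using cop1 by blast
        then show False using ij(2) sme by (simp add: strict_mono_less)
      qed
      then show ?thesis unfolding ij sat.simps sem_gC CfW wb by blast
    next
      case 4
      then obtain i j where ij: "(i, j) \<in> C2" "\<phi> = f2 (i, j)" using C2(3) by auto
      have "j < i" using ij(1) C2(1) by blast
      have "i \<in> fst ` C2" using ij(1) by (metis fst_conv image_eqI)
      then have "i < N" using N by blast
      have "holds F R \<theta> xs ys (cc j) (b (e i))" using cc[of j] \<open>j < i\<close> \<open>i < N\<close> unfolding ccP_def by blast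
      then show ?thesis unfolding ij f2_def by (simp add: sem_gC CfW wb)
    next
      case 5
      then obtain i j where ij: "\<phi> = Neg (S3f i j)" "i < j" unfolding S3_def by blast
      have "\<not> sat F R w (S3f i j)"
      proof
        assume "sat F R w (S3f i j)"
        then obtain c where "length c = ?X" "holds F R \<theta> xs ys c (map (\<lambda>p. w (av j p)) [0..<?L])"
          "holds F R \<theta> xs ys c (map (\<lambda>p. w (av i (?L + p))) [0..<?L])" unfolding sem_S3 by blast
        then have "e j < e i" using cop1 wa[of j] wb[of i] by simp
        then show False using ij(2) sme by (simp add: strict_mono_less)
      qed
      then show ?thesis unfolding ij by simp
    qed
  qed
qed

lemma main_ctx:
  assumes sat: "omega_saturated F R" and cop: "infty_COP F R \<theta> xs ys"
  shows "has_SOP3 F R (phi_of \<theta> xs) (map (\<lambda>n. 2 * n) xs) (map (\<lambda>n. 2 * n) ys @ map (\<lambda>n. 2 * n + 1) ys)"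
proof -
  have "\<forall>\<Delta>. \<Delta> \<subseteq> S1 \<union> S2a \<union> S2b \<union> S2c \<union> S3 \<longrightarrow> finite \<Delta> \<longrightarrow> (\<exists>w. \<forall>\<phi>\<in>\<Delta>. sat F R w \<phi>)"
    using witness[OF cop] by blast
  then obtain V where "\<forall>\<phi>\<in>S1 \<union> S2a \<union> S2b \<union> S2c \<union> S3. sat F R V \<phi>"
    using realize[OF sat] by blast
  then show ?thesis by (rule conclude)
qed

end

theorem mainTheorem9:
  fixes F :: "'f \<Rightarrow> 'm list \<Rightarrow> 'm" and R :: "'r \<Rightarrow> 'm list \<Rightarrow> bool"
    and \<theta> :: "('f, 'r) fm" and xs ys :: "nat list"
  assumes "omega_saturated F R"
    and "distinct xs" and "distinct ys" and "set xs \<inter> set ys = {}"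
    and "fv \<theta> \<subseteq> set xs \<union> set ys"
    and "infty_COP F R \<theta> xs ys"
  shows "has_SOP3 F R (phi_of \<theta> xs) (map (\<lambda>n. 2 * n) xs)
                      (map (\<lambda>n. 2 * n) ys @ map (\<lambda>n. 2 * n + 1) ys)"
  using main_ctx[OF assms(2,3,4,5,1,6)] .

end
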